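(* Let $G=(V,E)$ be a graph on $V=\{1,\ldots,n\}$ and $b(\mathbf x)=\sum_{ij\in E}a_{ij}x_ix_j$ with real coefficients. Let $\mathbf x\in\{0,1/2,1\}^n$ and put $T_1=\{i\in V:x_i=1\}$, $T_f=\{i\in V:x_i=1/2\}$. Then \begin{align*} \operatorname{vex}[b](\mathbf x)&=a(\gamma(T_1))+\tfrac12a(\delta(T_1,T_f))+\tfrac12a(\gamma(T_f))-\tfrac12\mu^+(T_f),\\ \operatorname{cav}[b](\mathbf x)&=a(\gamma(T_1))+\tfrac12a(\delta(T_1,T_f))+\tfrac12a(\gamma(T_f))-\tfrac12\mu^-(T_f),\\ \operatorname{chgap}[b](\mathbf x)&=\tfrac12\left(\mu^+(T_f)-\mu^-(T_f)\right). \end{align*}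
   Context: $B=\{(\mathbf x,z)\in[0,1]^n\times\mathbb R:z=b(\mathbf x)\}$; $\operatorname{cav}[b](\mathbf x)=\max\{z:(\mathbf x,z)\in\operatorname{conv}(B)\}$, $\operatorname{vex}[b](\mathbf x)=\min\{z:(\mathbf x,z)\in\operatorname{conv}(B)\}$, $\operatorname{chgap}[b]=\operatorname{cav}[b]-\operatorname{vex}[b]$. For $X\subseteq V$, $\gamma(X)$ is the set of edges of $G$ with both endpoints in $X$; for disjoint $X,Y\subseteq V$, $\delta(X,Y)$ is the set of edges with one endpoint in $X$ and one in $Y$; for $Z\subseteq E$, $a(Z)=\sum_{ij\in Z}a_{ij}$. For $X\subseteq V$, $\mu^+(X)=\max\{a(\delta(U_1,U_2)):U_1\cup U_2=X,\ U_1\cap U_2=\emptyset\}$ and $\mu^-(X)=\min\{a(\delta(U_1,U_2)):U_1\cup U_2=X,\ U_1\cap U_2=\emptyset\}$ (maximum and minimum cut weights in the subgraph induced by $X$, with $U_1$ or $U_2$ allowed to be empty). *)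

theory Defs
  imports "HOL-Analysis.Analysis"
begin

text \<open>Vertices are the elements of the finite index type 'n (playing the role of {1,...,n});
  a point of [0,1]^n is a vector x :: real^'n.  A graph is given by its edge set E,
  a set of 2-element vertex sets; coefficients are a function a on edges.\<close>

definition unit_cube :: "(real^'n) set" where
  "unit_cube = {x. \<forall>i. 0 \<le> x$i \<and> x$i \<le> 1}"

definition fgraph :: "(real^'n \<Rightarrow> real) \<Rightarrow> ((real^'n) \<times> real) set" where
  "fgraph b = {(x, z). x \<in> unit_cube \<and> z = b x}"

definition cav :: "(real^'n \<Rightarrow> real) \<Rightarrow> real^'n \<Rightarrow> real" where
  "cav b x = Sup {z. (x, z) \<in> convex hull (fgraph b)}"

definition vex :: "(real^'n \<Rightarrow> real) \<Rightarrow> real^'n \<Rightarrow> real" where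
  "vex b x = Inf {z. (x, z) \<in> convex hull (fgraph b)}"

definition chgap :: "(real^'n \<Rightarrow> real) \<Rightarrow> real^'n \<Rightarrow> real" where
  "chgap b x = cav b x - vex b x"

definition bilin :: "'n set set \<Rightarrow> ('n set \<Rightarrow> real) \<Rightarrow> real^'n \<Rightarrow> real" where
  "bilin E a x = (\<Sum>e\<in>E. a e * (\<Prod>i\<in>e. x$i))"

definition gamma :: "'n set set \<Rightarrow> 'n set \<Rightarrow> 'n set set" where
  "gamma E X = {e\<in>E. e \<subseteq> X}"

definition delta :: "'n set set \<Rightarrow> 'n set \<Rightarrow> 'n set \<Rightarrow> 'n set set" where
  "delta E X Y = {e\<in>E. \<exists>i\<in>X. \<exists>j\<in>Y. e = {i, j}}"

definition wt :: "('n set \<Rightarrow> real) \<Rightarrow> 'n set set \<Rightarrow> real" where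
  "wt a Z = (\<Sum>e\<in>Z. a e)"

definition mu_plus :: "'n set set \<Rightarrow> ('n set \<Rightarrow> real) \<Rightarrow> 'n set \<Rightarrow> real" where
  "mu_plus E a X = Max {wt a (delta E U1 U2) | U1 U2. U1 \<union> U2 = X \<and> U1 \<inter> U2 = {}}"

definition mu_minus :: "'n set set \<Rightarrow> ('n set \<Rightarrow> real) \<Rightarrow> 'n set \<Rightarrow> real" where
  "mu_minus E a X = Min {wt a (delta E U1 U2) | U1 U2. U1 \<union> U2 = X \<and> U1 \<inter> U2 = {}}"

end

theory Submission
  imports Defs
begin


definition cf :: "real^'n \<Rightarrow> 'n set \<Rightarrow> real" where
  "cf y e = (\<Sum>i\<in>e. y$i) - 2 * (\<Prod>i\<in>e. y$i)"
definition CC :: "'n set set \<Rightarrow> ('n set \<Rightarrow> real) \<Rightarrow> 'n set \<Rightarrow> real^'n \<Rightarrow> real" where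
  "CC E a Tf y = (\<Sum>e\<in>gamma E Tf. a e * cf y e)"
definition TT :: "real^'n \<Rightarrow> real^'n \<Rightarrow> 'n set \<Rightarrow> real" where
  "TT x y e = (\<Prod>i\<in>e. x$i) + (\<Sum>i\<in>e. (y$i - x$i) * (\<Prod>j\<in>e-{i}. x$j))"
definition Lin :: "'n set set \<Rightarrow> ('n set \<Rightarrow> real) \<Rightarrow> real^'n \<Rightarrow> real^'n \<Rightarrow> real" where
  "Lin E a x y = (\<Sum>e\<in>E. a e * TT x y e)"
definition ind :: "'n set \<Rightarrow> real^'n" where
  "ind U = (\<chi> i. if i \<in> U then 1 else 0)"
definition upd :: "real^'n \<Rightarrow> 'n \<Rightarrow> real \<Rightarrow> real^'n" where
  "upd y i s = (\<chi> j. if j = i then s else y$j)"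

lemma cf_split:
  assumes "card e = 2"
  shows "cf y e = (1 - y$i) * cf (upd y i 0) e + y$i * cf (upd y i 1) e"
proof -
  obtain p q where e: "e = {p,q}" "p \<noteq> q" using assms card_2_iff by metis
  show ?thesis using e unfolding cf_def upd_def
    by (cases "i = p"; cases "i = q"; simp add: algebra_simps)
qed

lemma CC_split:
  assumes "\<forall>e\<in>E. card e = 2"
  shows "CC E a Tf y = (1 - y$i) * CC E a Tf (upd y i 0) + y$i * CC E a Tf (upd y i 1)"
proof -
  have "\<And>e. e \<in> gamma E Tf \<Longrightarrow> a e * cf y e = (1 - y$i) * (a e * cf (upd y i 0) e) + y$i * (a e * cf (upd y i 1) e)"
  proof -
    fix e assume "e \<in> gamma E Tf"
    then have "card e = 2" using assms unfolding gamma_def by auto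
    then show "a e * cf y e = (1 - y$i) * (a e * cf (upd y i 0) e) + y$i * (a e * cf (upd y i 1) e)"
      by (subst cf_split[of e y i]) (simp_all add: algebra_simps)
  qed
  then show ?thesis unfolding CC_def
    by (simp add: sum_distrib_left sum.distrib)
qed

lemma round_aux:
  fixes F :: "'n::finite set" and E :: "'n set set"
  assumes edges: "\<forall>e\<in>E. card e = 2" and "finite F"
  shows "\<forall>y. (\<forall>i. 0 \<le> y$i \<and> y$i \<le> 1) \<longrightarrow> (\<forall>i. i \<notin> F \<longrightarrow> y$i = 0 \<or> y$i = 1) \<longrightarrow>
     (\<exists>U. CC E a Tf y \<le> CC E a Tf (ind U)) \<and> (\<exists>U. CC E a Tf (ind U) \<le> CC E a Tf y)"
  using \<open>finite F\<close>
proof (induction F rule: finite_induct)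
  case empty
  { fix y :: "real^'n" assume "\<forall>i. y$i = 0 \<or> y$i = 1"
    then have "y = ind {i. y$i = 1}" unfolding ind_def by (auto simp: vec_eq_iff)
  }
  then show ?case by (metis (no_types) order_refl empty_iff)
next
  case (insert i F)
  show ?case
  proof (intro allI impI)
    fix y :: "real^'n"
    assume c: "\<forall>i. 0 \<le> y$i \<and> y$i \<le> 1" and f: "\<forall>j. j \<notin> insert i F \<longrightarrow> y$j = 0 \<or> y$j = 1"
    let ?y0 = "upd y i 0" and ?y1 = "upd y i 1"
    have h0: "(\<exists>U. CC E a Tf ?y0 \<le> CC E a Tf (ind U)) \<and> (\<exists>U. CC E a Tf (ind U) \<le> CC E a Tf ?y0)"
      using insert.IH c f unfolding upd_def by auto
    have h1: "(\<exists>U. CC E a Tf ?y1 \<le> CC E a Tf (ind U)) \<and> (\<exists>U. CC E a Tf (ind U) \<le> CC E a Tf ?y1)"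
      using insert.IH c f unfolding upd_def by auto
    have sp: "CC E a Tf y = (1 - y$i) * CC E a Tf ?y0 + y$i * CC E a Tf ?y1"
      using CC_split edges by blast
    have t: "0 \<le> y$i" "y$i \<le> 1" using c by auto
    have up: "CC E a Tf y \<le> max (CC E a Tf ?y0) (CC E a Tf ?y1)"
    proof -
      have "(1 - y$i) * CC E a Tf ?y0 \<le> (1 - y$i) * max (CC E a Tf ?y0) (CC E a Tf ?y1)"
        by (rule mult_left_mono) (use t in auto)
      moreover have "y$i * CC E a Tf ?y1 \<le> y$i * max (CC E a Tf ?y0) (CC E a Tf ?y1)"
        by (rule mult_left_mono) (use t in auto)
      ultimately show ?thesis unfolding sp by (simp add: algebra_simps)
    qed
    have lo: "min (CC E a Tf ?y0) (CC E a Tf ?y1) \<le> CC E a Tf y"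
    proof -
      have "(1 - y$i) * min (CC E a Tf ?y0) (CC E a Tf ?y1) \<le> (1 - y$i) * CC E a Tf ?y0"
        by (rule mult_left_mono) (use t in auto)
      moreover have "y$i * min (CC E a Tf ?y0) (CC E a Tf ?y1) \<le> y$i * CC E a Tf ?y1"
        by (rule mult_left_mono) (use t in auto)
      ultimately show ?thesis unfolding sp by (simp add: algebra_simps)
    qed
    show "(\<exists>U. CC E a Tf y \<le> CC E a Tf (ind U)) \<and> (\<exists>U. CC E a Tf (ind U) \<le> CC E a Tf y)"
    proof
      show "\<exists>U. CC E a Tf y \<le> CC E a Tf (ind U)"
      proof (cases "CC E a Tf ?y0 \<le> CC E a Tf ?y1")
        case True then show ?thesis using up h1 by (metis max.absorb2 order_trans)
      next
        case False then show ?thesis using up h0 by (metis max.absorb1 nle_le order_trans)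
      qed
      show "\<exists>U. CC E a Tf (ind U) \<le> CC E a Tf y"
      proof (cases "CC E a Tf ?y0 \<le> CC E a Tf ?y1")
        case True then show ?thesis using lo h0 by (metis min.absorb1 order_trans)
      next
        case False then show ?thesis using lo h1 by (metis min.absorb2 nle_le order_trans)
      qed
    qed
  qed
qed

lemma cf_ind:
  assumes "p \<noteq> q" "p \<in> Tf" "q \<in> Tf" "{p,q} \<in> E"
  shows "cf (ind U) {p,q} = (if {p,q} \<in> delta E (U \<inter> Tf) (Tf - U) then 1 else 0)"
  using assms unfolding cf_def ind_def delta_def
  by (auto simp: doubleton_eq_iff)

lemma CC_ind:
  assumes edges: "\<forall>e\<in>E. card e = 2"
  shows "CC E a Tf (ind U) = wt a (delta E (U \<inter> Tf) (Tf - U))"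
proof -
  have fin: "finite (gamma E Tf)" by simp
  have "CC E a Tf (ind U) = (\<Sum>e\<in>gamma E Tf. if e \<in> delta E (U \<inter> Tf) (Tf - U) then a e else 0)"
    unfolding CC_def
  proof (rule sum.cong[OF refl])
    fix e assume e: "e \<in> gamma E Tf"
    then obtain p q where pq: "e = {p,q}" "p \<noteq> q" using edges unfolding gamma_def
      by (auto simp: card_2_iff)
    then show "a e * cf (ind U) e = (if e \<in> delta E (U \<inter> Tf) (Tf - U) then a e else 0)"
      using cf_ind[where p=p and q=q and Tf=Tf and U=U and E=E] e unfolding gamma_def by auto
  qed
  also have "\<dots> = (\<Sum>e\<in>{e\<in>gamma E Tf. e \<in> delta E (U \<inter> Tf) (Tf - U)}. a e)"
    by (simp add: sum.inter_filter)
  also have "{e\<in>gamma E Tf. e \<in> delta E (U \<inter> Tf) (Tf - U)} = delta E (U \<inter> Tf) (Tf - U)"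
    unfolding gamma_def delta_def by auto
  finally show ?thesis unfolding wt_def .
qed

lemma edge_face:
  fixes x y :: "real^'n"
  assumes "p \<noteq> q" "x$p \<in> {0, 1/2, 1}" "x$q \<in> {0, 1/2, 1}"
    "x$p \<noteq> 1/2 \<longrightarrow> y$p = x$p" "x$q \<noteq> 1/2 \<longrightarrow> y$q = x$q"
  shows "(\<Prod>i\<in>{p,q}. y$i) = TT x y {p,q} + (if x$p = 1/2 \<and> x$q = 1/2 then 1/4 - cf y {p,q} / 2 else 0)"
proof -
  have "x$p = 0 \<or> x$p = 1/2 \<or> x$p = 1" "x$q = 0 \<or> x$q = 1/2 \<or> x$q = 1" using assms by auto
  then show ?thesis using assms(1,4,5) unfolding TT_def cf_def
    apply (elim disjE)
    apply (simp_all (no_asm_simp) add: insert_Diff_if)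
    apply (simp_all add: field_simps)
    done
qed

lemma edge_x:
  fixes x :: "real^'n"
  assumes "p \<noteq> q" "x$p \<in> {0, 1/2, 1}" "x$q \<in> {0, 1/2, 1}"
  shows "(\<Prod>i\<in>{p,q}. x$i) = (if x$p = 1 \<and> x$q = 1 then 1 else 0)
     + (if (x$p = 1 \<and> x$q = 1/2) \<or> (x$p = 1/2 \<and> x$q = 1) then 1/2 else 0)
     + (if x$p = 1/2 \<and> x$q = 1/2 then 1/4 else 0)"
proof -
  have "x$p = 0 \<or> x$p = 1/2 \<or> x$p = 1" "x$q = 0 \<or> x$q = 1/2 \<or> x$q = 1" using assms by auto
  then show ?thesis using assms(1)
    apply (elim disjE)
    apply (simp_all (no_asm_simp))
    done
qed

lemma Lin_affine:
  assumes "finite S" "sum u S = 1"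
  shows "(\<Sum>p\<in>S. u p * Lin E a x (Y p)) = Lin E a x (\<Sum>p\<in>S. u p *\<^sub>R Y p)"
proof -
  have TT_aff: "(\<Sum>p\<in>S. u p * TT x (Y p) e) = TT x (\<Sum>p\<in>S. u p *\<^sub>R Y p) e" for e
  proof -
    have "(\<Sum>p\<in>S. u p * TT x (Y p) e) = (\<Sum>p\<in>S. u p * (\<Prod>i\<in>e. x$i)) +
        (\<Sum>p\<in>S. \<Sum>i\<in>e. u p * ((Y p$i - x$i) * (\<Prod>j\<in>e-{i}. x$j)))"
      unfolding TT_def by (simp add: sum.distrib algebra_simps sum_distrib_left)
    also have "(\<Sum>p\<in>S. \<Sum>i\<in>e. u p * ((Y p$i - x$i) * (\<Prod>j\<in>e-{i}. x$j)))
        = (\<Sum>i\<in>e. (\<Sum>p\<in>S. u p * (Y p$i - x$i)) * (\<Prod>j\<in>e-{i}. x$j))"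
      by (subst sum.swap) (simp add: sum_distrib_right mult.assoc)
    also have "\<dots> = (\<Sum>i\<in>e. ((\<Sum>p\<in>S. u p *\<^sub>R Y p)$i - x$i) * (\<Prod>j\<in>e-{i}. x$j))"
      using assms(2) by (simp add: right_diff_distrib sum_subtractf sum_distrib_right[symmetric])
    finally show ?thesis unfolding TT_def using assms(2) by (simp add: sum_distrib_right[symmetric])
  qed
  have "(\<Sum>p\<in>S. u p * (\<Sum>e\<in>E. a e * TT x (Y p) e)) = (\<Sum>p\<in>S. \<Sum>e\<in>E. a e * (u p * TT x (Y p) e))"
    by (simp add: sum_distrib_left mult.left_commute)
  also have "\<dots> = (\<Sum>e\<in>E. \<Sum>p\<in>S. a e * (u p * TT x (Y p) e))" by (rule sum.swap)
  also have "\<dots> = (\<Sum>e\<in>E. a e * TT x (\<Sum>p\<in>S. u p *\<^sub>R Y p) e)"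
    by (simp add: sum_distrib_left[symmetric] TT_aff)
  finally show ?thesis unfolding Lin_def .
qed

lemma edge_pq:
  assumes "\<forall>e\<in>E. card e = 2" "e \<in> E"
  obtains p q where "e = {p,q}" "p \<noteq> q"
  using assms by (metis card_2_iff)


lemma bilin_face:
  fixes x y :: "real^'n::finite"
  assumes edges: "\<forall>e\<in>E. card e = 2" and xvals: "\<forall>i. x$i \<in> {0, 1/2, 1}"
    and face: "\<forall>i. x$i \<noteq> 1/2 \<longrightarrow> y$i = x$i"
  shows "bilin E a y = Lin E a x y + wt a (gamma E {i. x$i = 1/2}) / 4 - CC E a {i. x$i = 1/2} y / 2"
proof -
  let ?Tf = "{i. x$i = 1/2}"
  have "bilin E a y = (\<Sum>e\<in>E. a e * TT x y e + ((if e \<subseteq> ?Tf then a e else 0) / 4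
         - (if e \<subseteq> ?Tf then a e * cf y e else 0) / 2))"
    unfolding bilin_def
  proof (rule sum.cong[OF refl])
    fix e assume "e \<in> E"
    then obtain p q where pq: "e = {p,q}" "p \<noteq> q" using edges edge_pq by blast
    have "(\<Prod>i\<in>{p,q}. y$i) = TT x y {p,q} + (if x$p = 1/2 \<and> x$q = 1/2 then 1/4 - cf y {p,q} / 2 else 0)"
      by (rule edge_face) (use pq xvals face in auto)
    moreover have "e \<subseteq> ?Tf \<longleftrightarrow> x$p = 1/2 \<and> x$q = 1/2" using pq by auto
    ultimately show "a e * (\<Prod>i\<in>e. y$i) = a e * TT x y e + ((if e \<subseteq> ?Tf then a e else 0) / 4
         - (if e \<subseteq> ?Tf then a e * cf y e else 0) / 2)"
      unfolding pq(1) by (simp add: algebra_simps)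
  qed
  also have "\<dots> = Lin E a x y + (\<Sum>e\<in>E. if e \<subseteq> ?Tf then a e else 0) / 4
      - (\<Sum>e\<in>E. if e \<subseteq> ?Tf then a e * cf y e else 0) / 2"
    unfolding Lin_def by (simp only: sum.distrib sum_subtractf sum_divide_distrib)
  also have "(\<Sum>e\<in>E. if e \<subseteq> ?Tf then a e else 0) = wt a (gamma E ?Tf)"
    unfolding wt_def gamma_def by (simp only: sum.inter_filter finite)
  also have "(\<Sum>e\<in>E. if e \<subseteq> ?Tf then a e * cf y e else 0) = CC E a ?Tf y"
    unfolding CC_def gamma_def by (simp only: sum.inter_filter finite)
  finally show ?thesis .
qed


lemma bilin_x:
  fixes x :: "real^'n::finite"
  assumes edges: "\<forall>e\<in>E. card e = 2" and xvals: "\<forall>i. x$i \<in> {0, 1/2, 1}"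
  shows "bilin E a x = wt a (gamma E {i. x$i = 1}) + wt a (delta E {i. x$i = 1} {i. x$i = 1/2}) / 2
     + wt a (gamma E {i. x$i = 1/2}) / 4"
proof -
  let ?T1 = "{i. x$i = 1}" and ?Tf = "{i. x$i = 1/2}"
  have "bilin E a x = (\<Sum>e\<in>E. (if e \<in> gamma E ?T1 then a e else 0)
      + (if e \<in> delta E ?T1 ?Tf then a e else 0) / 2 + (if e \<in> gamma E ?Tf then a e else 0) / 4)"
    unfolding bilin_def
  proof (rule sum.cong[OF refl])
    fix e assume eE: "e \<in> E"
    then obtain p q where pq: "e = {p,q}" "p \<noteq> q" using edges edge_pq by blast
    have h: "(\<Prod>i\<in>{p,q}. x$i) = (if x$p = 1 \<and> x$q = 1 then 1 else 0)
     + (if (x$p = 1 \<and> x$q = 1/2) \<or> (x$p = 1/2 \<and> x$q = 1) then 1/2 else 0)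
     + (if x$p = 1/2 \<and> x$q = 1/2 then 1/4 else 0)"
      by (rule edge_x) (use pq xvals in auto)
    have g1: "e \<in> gamma E ?T1 \<longleftrightarrow> x$p = 1 \<and> x$q = 1" using pq eE unfolding gamma_def by auto
    have g2: "e \<in> gamma E ?Tf \<longleftrightarrow> x$p = 1/2 \<and> x$q = 1/2" using pq eE unfolding gamma_def by auto
    have g3: "e \<in> delta E ?T1 ?Tf \<longleftrightarrow> (x$p = 1 \<and> x$q = 1/2) \<or> (x$p = 1/2 \<and> x$q = 1)"
    proof
      assume "e \<in> delta E ?T1 ?Tf"
      then obtain i j where ij: "x$i = 1" "x$j = 1/2" "{p,q} = {i,j}" unfolding delta_def pq(1) by blast
      then have "(p = i \<and> q = j) \<or> (p = j \<and> q = i)" by (simp add: doubleton_eq_iff)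
      then show "(x$p = 1 \<and> x$q = 1/2) \<or> (x$p = 1/2 \<and> x$q = 1)" using ij(1,2) by blast
    next
      assume h: "(x$p = 1 \<and> x$q = 1/2) \<or> (x$p = 1/2 \<and> x$q = 1)"
      show "e \<in> delta E ?T1 ?Tf"
      proof (cases "x$p = 1 \<and> x$q = 1/2")
        case True
        then show ?thesis using eE unfolding delta_def pq(1) by blast
      next
        case False
        then have "x$q = 1" "x$p = 1/2" using h by auto
        moreover have "{p,q} = {q,p}" by (rule insert_commute)
        ultimately show ?thesis using eE unfolding delta_def pq(1) by blast
      qed
    qed
    show "a e * (\<Prod>i\<in>e. x$i) = (if e \<in> gamma E ?T1 then a e else 0)
      + (if e \<in> delta E ?T1 ?Tf then a e else 0) / 2 + (if e \<in> gamma E ?Tf then a e else 0) / 4"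
      unfolding g1 g2 g3 unfolding pq(1) h by (simp add: algebra_simps)
  qed
  also have "\<dots> = wt a (gamma E ?T1) + wt a (delta E ?T1 ?Tf) / 2 + wt a (gamma E ?Tf) / 4"
  proof -
    have fl: "(\<Sum>e\<in>E. if e \<in> Z then a e else 0) = wt a Z" if "Z \<subseteq> E" for Z
    proof -
      have "(\<Sum>e\<in>E. if e \<in> Z then a e else 0) = sum a {e\<in>E. e \<in> Z}"
        by (rule sum.inter_filter[symmetric]) simp
      also have "{e\<in>E. e \<in> Z} = Z" using that by auto
      finally show ?thesis unfolding wt_def .
    qed
    have sub: "gamma E ?T1 \<subseteq> E" "gamma E ?Tf \<subseteq> E" "delta E ?T1 ?Tf \<subseteq> E"
      unfolding gamma_def delta_def by auto
    show ?thesis by (simp only: sum.distrib sum_divide_distrib[symmetric] fl[OF sub(1)] fl[OF sub(2)] fl[OF sub(3)])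
  qed
  finally show ?thesis .
qed


lemma Lin_xx: "Lin E a x x = bilin E a x"
  unfolding Lin_def TT_def bilin_def by simp

lemma delta_sym: "delta E X Y = delta E Y X"
  unfolding delta_def by (auto simp: insert_commute)

lemma cut_set_finite:
  "finite {wt a (delta E U1 U2) | U1 U2. U1 \<union> U2 = (Tf::'n::finite set) \<and> U1 \<inter> U2 = {}}"
proof -
  have "{wt a (delta E U1 U2) | U1 U2. U1 \<union> U2 = Tf \<and> U1 \<inter> U2 = {}} \<subseteq> (\<lambda>(U1,U2). wt a (delta E U1 U2)) ` UNIV"
    by auto
  then show ?thesis by (rule finite_subset) simp
qed

lemma CC_bounds:
  fixes y :: "real^'n::finite"
  assumes edges: "\<forall>e\<in>E. card e = 2" and cube: "\<forall>i. 0 \<le> y$i \<and> y$i \<le> 1"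
  shows "mu_minus E a Tf \<le> CC E a Tf y \<and> CC E a Tf y \<le> mu_plus E a Tf"
proof -
  have mem: "CC E a Tf (ind U) \<in> {wt a (delta E U1 U2) | U1 U2. U1 \<union> U2 = Tf \<and> U1 \<inter> U2 = {}}" for U
    unfolding CC_ind[OF edges] by blast
  obtain U V where "CC E a Tf y \<le> CC E a Tf (ind U)" "CC E a Tf (ind V) \<le> CC E a Tf y"
    using round_aux[OF edges, of UNIV a Tf] cube by auto
  moreover have "CC E a Tf (ind U) \<le> mu_plus E a Tf"
    unfolding mu_plus_def by (rule Max_ge[OF cut_set_finite mem])
  moreover have "mu_minus E a Tf \<le> CC E a Tf (ind V)"
    unfolding mu_minus_def by (rule Min_le[OF cut_set_finite mem])
  ultimately show ?thesis by linarith
qed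

lemma mu_attained:
  fixes Tf :: "'n::finite set"
  shows "\<exists>U\<subseteq>Tf. wt a (delta E U (Tf - U)) = mu_plus E a Tf"
    and "\<exists>U\<subseteq>Tf. wt a (delta E U (Tf - U)) = mu_minus E a Tf"
proof -
  have ne: "{wt a (delta E U1 U2) | U1 U2. U1 \<union> U2 = Tf \<and> U1 \<inter> U2 = {}} \<noteq> {}" by blast
  have "mu_plus E a Tf \<in> {wt a (delta E U1 U2) | U1 U2. U1 \<union> U2 = Tf \<and> U1 \<inter> U2 = {}}"
    unfolding mu_plus_def by (rule Max_in[OF cut_set_finite ne])
  then obtain U1 U2 where h: "mu_plus E a Tf = wt a (delta E U1 U2)" "U1 \<union> U2 = Tf" "U1 \<inter> U2 = {}" by blast
  have u2: "U2 = Tf - U1" using h(2,3) by blast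
  show "\<exists>U\<subseteq>Tf. wt a (delta E U (Tf - U)) = mu_plus E a Tf"
  proof (intro exI conjI)
    show "U1 \<subseteq> Tf" using h(2) by blast
    show "wt a (delta E U1 (Tf - U1)) = mu_plus E a Tf" using h(1) u2 by simp
  qed
  have "mu_minus E a Tf \<in> {wt a (delta E U1 U2) | U1 U2. U1 \<union> U2 = Tf \<and> U1 \<inter> U2 = {}}"
    unfolding mu_minus_def by (rule Min_in[OF cut_set_finite ne])
  then obtain U1 U2 where h: "mu_minus E a Tf = wt a (delta E U1 U2)" "U1 \<union> U2 = Tf" "U1 \<inter> U2 = {}" by blast
  have u2: "U2 = Tf - U1" using h(2,3) by blast
  show "\<exists>U\<subseteq>Tf. wt a (delta E U (Tf - U)) = mu_minus E a Tf"
  proof (intro exI conjI)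
    show "U1 \<subseteq> Tf" using h(2) by blast
    show "wt a (delta E U1 (Tf - U1)) = mu_minus E a Tf" using h(1) u2 by simp
  qed
qed



lemma hull_bounds:
  fixes x :: "real^'n::finite"
  assumes edges: "\<forall>e\<in>E. card e = 2" and xvals: "\<forall>i. x$i \<in> {0, 1/2, 1}"
    and Tf: "Tf = {i. x$i = 1/2}"
    and K: "K = Lin E a x x + wt a (gamma E Tf) / 4"
    and mem: "(x, z) \<in> convex hull (fgraph (bilin E a))"
  shows "K - mu_plus E a Tf / 2 \<le> z \<and> z \<le> K - mu_minus E a Tf / 2"
proof -
  obtain S u where S: "finite S" "S \<subseteq> fgraph (bilin E a)" "\<forall>p\<in>S. 0 \<le> u p" "sum u S = 1"
      "(\<Sum>v\<in>S. u v *\<^sub>R v) = (x, z)"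
    using mem unfolding convex_hull_explicit by blast
  have xs: "x = (\<Sum>p\<in>S. u p *\<^sub>R fst p)"
    using arg_cong[OF S(5), of fst] by (simp add: fst_sum)
  have zs: "z = (\<Sum>p\<in>S. u p * snd p)"
    using arg_cong[OF S(5), of snd] by (simp add: snd_sum)
  have inS: "fst p \<in> unit_cube \<and> snd p = bilin E a (fst p)" if "p \<in> S" for p
    using S(2) that unfolding fgraph_def by auto
  have xi: "x$i = (\<Sum>p\<in>S. u p * fst p $ i)" for i
  proof -
    have "x$i = (\<Sum>p\<in>S. u p *\<^sub>R fst p) $ i" using xs by simp
    also have "\<dots> = (\<Sum>p\<in>S. u p * fst p $ i)" by simp
    finally show ?thesis .
  qed
  have face: "\<forall>i. x$i \<noteq> 1/2 \<longrightarrow> fst p $ i = x$i" if p: "p \<in> S" "u p \<noteq> 0" for p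
  proof (intro allI impI)
    fix i assume h: "x$i \<noteq> 1/2"
    have c: "0 \<le> fst p $ i" "fst p $ i \<le> 1" using inS[OF p(1)] unfolding unit_cube_def by auto
    have up: "0 \<le> u p" using S(3) p by auto
    consider "x$i = 0" | "x$i = 1" using xvals h by auto
    then show "fst p $ i = x$i"
    proof cases
      case 1
      have s0: "(\<Sum>p\<in>S. u p * fst p $ i) = 0" using 1 xi by simp
      have nn: "\<forall>q\<in>S. 0 \<le> u q * fst q $ i"
      proof
        fix q assume "q \<in> S"
        then have "0 \<le> u q" "0 \<le> fst q $ i" using S(3) inS[of q] unfolding unit_cube_def by auto
        then show "0 \<le> u q * fst q $ i" by simp
      qed
      have "(\<Sum>p\<in>S. u p * fst p $ i) = 0 \<longleftrightarrow> (\<forall>q\<in>S. u q * fst q $ i = 0)"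
        by (rule sum_nonneg_eq_0_iff[OF S(1)]) (use nn in blast)
      then have "u p * fst p $ i = 0" using s0 p(1) by blast
      then show ?thesis using 1 p(2) by simp
    next
      case 2
      have "(\<Sum>p\<in>S. u p * (1 - fst p $ i)) = sum u S - (\<Sum>p\<in>S. u p * fst p $ i)"
        by (simp add: right_diff_distrib sum_subtractf)
      then have s0: "(\<Sum>p\<in>S. u p * (1 - fst p $ i)) = 0" using 2 xi S(4) by simp
      have nn: "\<forall>q\<in>S. 0 \<le> u q * (1 - fst q $ i)"
      proof
        fix q assume "q \<in> S"
        then have "0 \<le> u q" "fst q $ i \<le> 1" using S(3) inS[of q] unfolding unit_cube_def by auto
        then show "0 \<le> u q * (1 - fst q $ i)" by simp
      qed
      have "(\<Sum>p\<in>S. u p * (1 - fst p $ i)) = 0 \<longleftrightarrow> (\<forall>q\<in>S. u q * (1 - fst q $ i) = 0)"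
        by (rule sum_nonneg_eq_0_iff[OF S(1)]) (use nn in blast)
      then have "u p * (1 - fst p $ i) = 0" using s0 p(1) by blast
      then show ?thesis using 2 p(2) by simp
    qed
  qed
  have "z = (\<Sum>p\<in>S. u p * (Lin E a x (fst p) + wt a (gamma E Tf) / 4 - CC E a Tf (fst p) / 2))"
    unfolding zs
  proof (rule sum.cong[OF refl])
    fix p assume p: "p \<in> S"
    show "u p * snd p = u p * (Lin E a x (fst p) + wt a (gamma E Tf) / 4 - CC E a Tf (fst p) / 2)"
    proof (cases "u p = 0")
      case False
      then show ?thesis using inS[OF p] bilin_face[OF edges xvals face[OF p False]] Tf by simp
    qed simp
  qed
  also have "\<dots> = (\<Sum>p\<in>S. u p * Lin E a x (fst p)) + wt a (gamma E Tf) / 4 - (\<Sum>p\<in>S. u p * CC E a Tf (fst p)) / 2"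
    using S(4) by (simp add: algebra_simps sum.distrib sum_subtractf sum_distrib_right[symmetric] sum_divide_distrib[symmetric])
  also have "(\<Sum>p\<in>S. u p * Lin E a x (fst p)) = Lin E a x x"
    using Lin_affine[OF S(1) S(4), of E a x fst] xs by simp
  finally have zK: "z = K - (\<Sum>p\<in>S. u p * CC E a Tf (fst p)) / 2" using K by simp
  have bnd: "mu_minus E a Tf \<le> CC E a Tf (fst p) \<and> CC E a Tf (fst p) \<le> mu_plus E a Tf" if "p \<in> S" for p
    using CC_bounds[OF edges] inS[OF that] unfolding unit_cube_def by blast
  have "(\<Sum>p\<in>S. u p * CC E a Tf (fst p)) \<le> (\<Sum>p\<in>S. u p * mu_plus E a Tf)"
    by (rule sum_mono, rule mult_left_mono) (use bnd S(3) in auto)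
  also have "\<dots> = mu_plus E a Tf" using S(4) by (simp add: sum_distrib_right[symmetric])
  finally have up: "(\<Sum>p\<in>S. u p * CC E a Tf (fst p)) \<le> mu_plus E a Tf" .
  have "mu_minus E a Tf = (\<Sum>p\<in>S. u p * mu_minus E a Tf)" using S(4) by (simp add: sum_distrib_right[symmetric])
  also have "\<dots> \<le> (\<Sum>p\<in>S. u p * CC E a Tf (fst p))"
    by (rule sum_mono, rule mult_left_mono) (use bnd S(3) in auto)
  finally have lo: "mu_minus E a Tf \<le> (\<Sum>p\<in>S. u p * CC E a Tf (fst p))" .
  show ?thesis using zK up lo by linarith
qed



lemma witness:
  fixes x :: "real^'n::finite"
  assumes edges: "\<forall>e\<in>E. card e = 2" and xvals: "\<forall>i. x$i \<in> {0, 1/2, 1}"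
    and T1: "T1 = {i. x$i = 1}" and Tf: "Tf = {i. x$i = 1/2}"
    and K: "K = Lin E a x x + wt a (gamma E Tf) / 4"
    and U: "U \<subseteq> Tf"
  shows "(x, K - wt a (delta E U (Tf - U)) / 2) \<in> convex hull (fgraph (bilin E a))"
proof -
  define v where "v = ind (T1 \<union> U)"
  define v' where "v' = ind (T1 \<union> (Tf - U))"
  have disj: "T1 \<inter> Tf = {}" using T1 Tf by auto
  have fv: "\<forall>i. x$i \<noteq> 1/2 \<longrightarrow> v$i = x$i"
  proof (intro allI impI)
    fix i assume h: "x$i \<noteq> 1/2"
    then have "i \<notin> U" using U Tf by auto
    then show "v$i = x$i" using xvals h T1 unfolding v_def ind_def by auto
  qed
  have fv': "\<forall>i. x$i \<noteq> 1/2 \<longrightarrow> v'$i = x$i"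
  proof (intro allI impI)
    fix i assume h: "x$i \<noteq> 1/2"
    then have "i \<notin> Tf" using Tf by auto
    then show "v'$i = x$i" using xvals h T1 unfolding v'_def ind_def by auto
  qed
  have cv: "v \<in> unit_cube" "v' \<in> unit_cube" unfolding v_def v'_def ind_def unit_cube_def by auto
  have C1: "CC E a Tf v = wt a (delta E U (Tf - U))"
  proof -
    have "(T1 \<union> U) \<inter> Tf = U" "Tf - (T1 \<union> U) = Tf - U" using disj U by auto
    then show ?thesis unfolding v_def CC_ind[OF edges] by simp
  qed
  have C2: "CC E a Tf v' = wt a (delta E U (Tf - U))"
  proof -
    have "(T1 \<union> (Tf - U)) \<inter> Tf = Tf - U" "Tf - (T1 \<union> (Tf - U)) = U" using disj U by auto
    then show ?thesis unfolding v'_def CC_ind[OF edges] by (simp add: delta_sym)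
  qed
  have b1: "bilin E a v = Lin E a x v + wt a (gamma E Tf) / 4 - CC E a Tf v / 2"
    using bilin_face[OF edges xvals fv] Tf by simp
  have b2: "bilin E a v' = Lin E a x v' + wt a (gamma E Tf) / 4 - CC E a Tf v' / 2"
    using bilin_face[OF edges xvals fv'] Tf by simp
  have xv: "x = (1/2) *\<^sub>R v + (1/2) *\<^sub>R v'"
  proof (subst vec_eq_iff, intro allI)
    fix i
    consider "x$i = 0" | "x$i = 1/2" | "x$i = 1" using xvals by auto
    then show "x$i = ((1/2) *\<^sub>R v + (1/2) *\<^sub>R v') $ i"
    proof cases
      case 1 then show ?thesis using fv fv' by simp
    next
      case 2
      then have "i \<in> Tf" "i \<notin> T1" using Tf T1 by auto
      then have "v$i + v'$i = 1" unfolding v_def v'_def ind_def by auto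
      then show ?thesis using 2 by simp
    next
      case 3 then show ?thesis using fv fv' by simp
    qed
  qed
  have "(\<Sum>b\<in>(UNIV::bool set). (1/2) * Lin E a x (if b then v else v'))
      = Lin E a x (\<Sum>b\<in>(UNIV::bool set). (1/2) *\<^sub>R (if b then v else v'))"
    by (rule Lin_affine) auto
  then have L: "Lin E a x v / 2 + Lin E a x v' / 2 = Lin E a x x"
    using xv by (simp add: UNIV_bool add.commute)
  have "(x, K - wt a (delta E U (Tf - U)) / 2) = (1/2) *\<^sub>R (v, bilin E a v) + (1/2) *\<^sub>R (v', bilin E a v')"
  proof -
    have "K - wt a (delta E U (Tf - U)) / 2 = (1/2) * bilin E a v + (1/2) * bilin E a v'"
      unfolding b1 b2 C1 C2 K using L by (simp add: field_simps)
    then show ?thesis using xv by simp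
  qed
  also have "\<dots> \<in> convex hull (fgraph (bilin E a))"
    by (rule convexD[OF convex_convex_hull]) (auto intro!: hull_inc simp: fgraph_def cv)
  finally show ?thesis .
qed

theorem lemma1:
  fixes E :: "('n::finite) set set" and a :: "'n set \<Rightarrow> real" and x :: "real^'n"
  assumes edges: "\<forall>e\<in>E. card e = 2"
    and xvals: "\<forall>i. x$i \<in> {0, 1/2, 1}"
  defines "T1 \<equiv> {i. x$i = 1}" and "Tf \<equiv> {i. x$i = 1/2}"
  shows "vex (bilin E a) x = wt a (gamma E T1) + wt a (delta E T1 Tf) / 2 + wt a (gamma E Tf) / 2
            - mu_plus E a Tf / 2
       \<and> cav (bilin E a) x = wt a (gamma E T1) + wt a (delta E T1 Tf) / 2 + wt a (gamma E Tf) / 2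
            - mu_minus E a Tf / 2
       \<and> chgap (bilin E a) x = (mu_plus E a Tf - mu_minus E a Tf) / 2"
proof -
  have T1: "T1 = {i. x$i = 1}" and Tf: "Tf = {i. x$i = 1/2}" unfolding T1_def Tf_def by simp_all
  define K where "K = Lin E a x x + wt a (gamma E Tf) / 4"
  have KK: "K = wt a (gamma E T1) + wt a (delta E T1 Tf) / 2 + wt a (gamma E Tf) / 2"
    unfolding K_def Lin_xx bilin_x[OF edges xvals] T1 Tf by simp
  let ?Z = "{z. (x, z) \<in> convex hull (fgraph (bilin E a))}"
  have bnd: "K - mu_plus E a Tf / 2 \<le> z \<and> z \<le> K - mu_minus E a Tf / 2" if "z \<in> ?Z" for z
    using hull_bounds[OF edges xvals Tf K_def] that by blast
  obtain Up where Up: "Up \<subseteq> Tf" "wt a (delta E Up (Tf - Up)) = mu_plus E a Tf"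
    using mu_attained(1) by blast
  obtain Um where Um: "Um \<subseteq> Tf" "wt a (delta E Um (Tf - Um)) = mu_minus E a Tf"
    using mu_attained(2) by blast
  have inp: "K - mu_plus E a Tf / 2 \<in> ?Z"
    using witness[OF edges xvals T1 Tf K_def Up(1)] Up(2) by simp
  have inm: "K - mu_minus E a Tf / 2 \<in> ?Z"
    using witness[OF edges xvals T1 Tf K_def Um(1)] Um(2) by simp
  have v: "vex (bilin E a) x = K - mu_plus E a Tf / 2"
    unfolding vex_def by (rule cInf_eq_minimum[OF inp]) (use bnd in blast)
  have c: "cav (bilin E a) x = K - mu_minus E a Tf / 2"
    unfolding cav_def by (rule cSup_eq_maximum[OF inm]) (use bnd in blast)
  show ?thesis unfolding chgap_def v c KK by (simp add: field_simps)
qed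


end
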